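(* Let $n\ge2$ be even. Then every $n$-Gumm variety and every doubly defective $n$-alvin variety is $(2n-3)$-reversed-modular when $n\ge4$ (hence $(2n-2)$-modular). Moreover this is optimal: for every even $n\ge2$ there is a locally finite variety which is doubly defective $n$-alvin, and in fact $n$-Gumm, but is not $(2n-3)$-modular.
   Context: Alvin equations for ternary $t_0,\dots,t_n$: $t_0(x,y,z)=x$, $t_n(x,y,z)=z$, $t_h(x,y,x)=x$ for $0\le h\le n$, $t_h(x,z,z)=t_{h+1}(x,z,z)$ for even $h$, $t_h(x,x,z)=t_{h+1}(x,x,z)$ for odd $h$ ($0\le h<n$). Gumm terms: all alvin equations except $t_1(x,y,x)=x$. Doubly defective alvin terms: all alvin equations except $t_1(x,y,x)=x$ and $t_{n-1}(x,y,x)=x$. A variety is $n$-Gumm (doubly defective $n$-alvin) if it has such terms $t_0,\dots,t_n$. Day terms: $4$-ary $u_0,\dots,u_m$ with $u_k(x,y,y,x)=x$ for all $k$, $u_0(x,y,z,w)=x$, $u_m(x,y,z,w)=w$, $u_k(x,x,w,w)=u_{k+1}(x,x,w,w)$ for even $k$, $u_k(x,y,y,w)=u_{k+1}(x,y,y,w)$ for odd $k$; reversed Day terms: even/odd exchanged in the last two. $m$-modular ($m$-reversed-modular): having Day (reversed Day) terms $u_0,\dots,u_m$. *)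

theory Defs
  imports Main
begin

datatype 'f trm = Var nat | Fun 'f "'f trm list"

fun wf_trm :: "('f \<Rightarrow> nat) \<Rightarrow> 'f trm \<Rightarrow> bool" where
  "wf_trm ar (Var v) = True"
| "wf_trm ar (Fun f ts) = (length ts = ar f \<and> (\<forall>t\<in>set ts. wf_trm ar t))"

fun vars_trm :: "'f trm \<Rightarrow> nat set" where
  "vars_trm (Var v) = {v}"
| "vars_trm (Fun f ts) = (\<Union>t\<in>set ts. vars_trm t)"

fun subst :: "(nat \<Rightarrow> 'f trm) \<Rightarrow> 'f trm \<Rightarrow> 'f trm" where
  "subst \<sigma> (Var v) = \<sigma> v"
| "subst \<sigma> (Fun f ts) = Fun f (map (subst \<sigma>) ts)"

text \<open>A variety is presented by a set of identities Sigma (pairs of well-formed terms);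
  the variety is Mod(Sigma).  An identity holds in the variety iff it is an equational
  consequence of Sigma (Birkhoff's completeness theorem); we use the standard rules of
  equational logic.\<close>

definition equational_theory :: "('f \<Rightarrow> nat) \<Rightarrow> ('f trm \<times> 'f trm) set \<Rightarrow> bool" where
  "equational_theory ar \<Sigma> \<longleftrightarrow> (\<forall>(s,t)\<in>\<Sigma>. wf_trm ar s \<and> wf_trm ar t)"

inductive eqc :: "('f \<Rightarrow> nat) \<Rightarrow> ('f trm \<times> 'f trm) set \<Rightarrow> 'f trm \<Rightarrow> 'f trm \<Rightarrow> bool"
  for ar \<Sigma> where
  ax: "(s, t) \<in> \<Sigma> \<Longrightarrow> (\<forall>i. wf_trm ar (\<sigma> i)) \<Longrightarrow> eqc ar \<Sigma> (subst \<sigma> s) (subst \<sigma> t)"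
| refl: "wf_trm ar t \<Longrightarrow> eqc ar \<Sigma> t t"
| sym: "eqc ar \<Sigma> s t \<Longrightarrow> eqc ar \<Sigma> t s"
| trans: "eqc ar \<Sigma> s t \<Longrightarrow> eqc ar \<Sigma> t u \<Longrightarrow> eqc ar \<Sigma> s u"
| cong: "length ss = ar f \<Longrightarrow> length ts = length ss \<Longrightarrow>
         (\<forall>i<length ss. eqc ar \<Sigma> (ss ! i) (ts ! i)) \<Longrightarrow> eqc ar \<Sigma> (Fun f ss) (Fun f ts)"

abbreviation "vx \<equiv> Var 0"
abbreviation "vy \<equiv> Var 1"
abbreviation "vz \<equiv> Var 2"
abbreviation "vw \<equiv> Var 3"

definition kary :: "('f \<Rightarrow> nat) \<Rightarrow> nat \<Rightarrow> 'f trm \<Rightarrow> bool" where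
  "kary ar k t \<longleftrightarrow> wf_trm ar t \<and> vars_trm t \<subseteq> {..<k}"

definition app3 :: "'f trm \<Rightarrow> 'f trm \<Rightarrow> 'f trm \<Rightarrow> 'f trm \<Rightarrow> 'f trm" where
  "app3 t a b c = subst (\<lambda>i. if i = 0 then a else if i = 1 then b else c) t"

definition app4 :: "'f trm \<Rightarrow> 'f trm \<Rightarrow> 'f trm \<Rightarrow> 'f trm \<Rightarrow> 'f trm \<Rightarrow> 'f trm" where
  "app4 u a b c d = subst (\<lambda>i. if i = 0 then a else if i = 1 then b else if i = 2 then c else d) u"

definition alvin_terms_except ::
  "('f \<Rightarrow> nat) \<Rightarrow> ('f trm \<times> 'f trm) set \<Rightarrow> nat \<Rightarrow> nat set \<Rightarrow> (nat \<Rightarrow> 'f trm) \<Rightarrow> bool" where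
  "alvin_terms_except ar \<Sigma> n E t \<longleftrightarrow>
     (\<forall>h\<le>n. kary ar 3 (t h)) \<and>
     eqc ar \<Sigma> (app3 (t 0) vx vy vz) vx \<and>
     eqc ar \<Sigma> (app3 (t n) vx vy vz) vz \<and>
     (\<forall>h\<le>n. h \<notin> E \<longrightarrow> eqc ar \<Sigma> (app3 (t h) vx vy vx) vx) \<and>
     (\<forall>h<n. even h \<longrightarrow> eqc ar \<Sigma> (app3 (t h) vx vz vz) (app3 (t (h+1)) vx vz vz)) \<and>
     (\<forall>h<n. odd h \<longrightarrow> eqc ar \<Sigma> (app3 (t h) vx vx vz) (app3 (t (h+1)) vx vx vz))"

definition n_gumm :: "('f \<Rightarrow> nat) \<Rightarrow> ('f trm \<times> 'f trm) set \<Rightarrow> nat \<Rightarrow> bool" where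
  "n_gumm ar \<Sigma> n \<longleftrightarrow> (\<exists>t. alvin_terms_except ar \<Sigma> n {1} t)"

definition dd_alvin :: "('f \<Rightarrow> nat) \<Rightarrow> ('f trm \<times> 'f trm) set \<Rightarrow> nat \<Rightarrow> bool" where
  "dd_alvin ar \<Sigma> n \<longleftrightarrow> (\<exists>t. alvin_terms_except ar \<Sigma> n {1, n - 1} t)"

text \<open>Day terms (rv = False) and reversed Day terms (rv = True).\<close>
definition day_terms ::
  "('f \<Rightarrow> nat) \<Rightarrow> ('f trm \<times> 'f trm) set \<Rightarrow> bool \<Rightarrow> nat \<Rightarrow> (nat \<Rightarrow> 'f trm) \<Rightarrow> bool" where
  "day_terms ar \<Sigma> rv m u \<longleftrightarrow>
     (\<forall>k\<le>m. kary ar 4 (u k)) \<and>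
     (\<forall>k\<le>m. eqc ar \<Sigma> (app4 (u k) vx vy vy vx) vx) \<and>
     eqc ar \<Sigma> (app4 (u 0) vx vy vz vw) vx \<and>
     eqc ar \<Sigma> (app4 (u m) vx vy vz vw) vw \<and>
     (\<forall>k<m. (even k \<noteq> rv) \<longrightarrow> eqc ar \<Sigma> (app4 (u k) vx vx vw vw) (app4 (u (k+1)) vx vx vw vw)) \<and>
     (\<forall>k<m. (odd k \<noteq> rv) \<longrightarrow> eqc ar \<Sigma> (app4 (u k) vx vy vy vw) (app4 (u (k+1)) vx vy vy vw))"

definition modular :: "('f \<Rightarrow> nat) \<Rightarrow> ('f trm \<times> 'f trm) set \<Rightarrow> nat \<Rightarrow> bool" where
  "modular ar \<Sigma> m \<longleftrightarrow> (\<exists>u. day_terms ar \<Sigma> False m u)"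

definition reversed_modular :: "('f \<Rightarrow> nat) \<Rightarrow> ('f trm \<times> 'f trm) set \<Rightarrow> nat \<Rightarrow> bool" where
  "reversed_modular ar \<Sigma> m \<longleftrightarrow> (\<exists>u. day_terms ar \<Sigma> True m u)"

text \<open>Locally finite: every free algebra on finitely many (k) generators is finite,
  i.e. finitely many k-ary terms modulo the equational theory.\<close>
definition locally_finite :: "('f \<Rightarrow> nat) \<Rightarrow> ('f trm \<times> 'f trm) set \<Rightarrow> bool" where
  "locally_finite ar \<Sigma> \<longleftrightarrow>
     (\<forall>k. finite ((\<lambda>t. {s. kary ar k s \<and> eqc ar \<Sigma> s t}) ` {t. kary ar k t}))"

end

theory Submission
  imports Defs "HOL-Library.FuncSet"
begin


lemma eqc_Var[simp]: "eqc ar \<Sigma> (Var i) (Var i)" by (rule eqc.refl) simp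

lemma subst_subst: "subst \<sigma> (subst \<tau> t) = subst (\<lambda>i. subst \<sigma> (\<tau> i)) t"
  by (induction t) auto

lemma subst_Var: "subst Var t = t"
  by (induction t) (auto simp: map_idI)

lemma subst_cong: "(\<And>i. i \<in> vars_trm t \<Longrightarrow> \<sigma> i = \<tau> i) \<Longrightarrow> subst \<sigma> t = subst \<tau> t"
  by (induction t) auto

lemma wf_subst: "wf_trm ar t \<Longrightarrow> (\<And>i. wf_trm ar (\<sigma> i)) \<Longrightarrow> wf_trm ar (subst \<sigma> t)"
  by (induction t) auto

lemma vars_subst: "vars_trm (subst \<sigma> t) = (\<Union>i\<in>vars_trm t. vars_trm (\<sigma> i))"
  by (induction t) auto

lemma eqc_subst:
  assumes "eqc ar \<Sigma> s t" "\<And>i. wf_trm ar (\<sigma> i)"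
  shows "eqc ar \<Sigma> (subst \<sigma> s) (subst \<sigma> t)"
  using assms
proof (induction rule: eqc.induct)
  case (ax s t \<tau>)
  have "eqc ar \<Sigma> (subst (\<lambda>i. subst \<sigma> (\<tau> i)) s) (subst (\<lambda>i. subst \<sigma> (\<tau> i)) t)"
    using ax by (intro eqc.ax) (auto intro: wf_subst)
  then show ?case by (simp add: subst_subst)
next
  case (refl t) then show ?case by (auto intro: eqc.refl wf_subst)
next
  case (sym s t) then show ?case by (auto intro: eqc.sym)
next
  case (trans s t u) then show ?case by (auto intro: eqc.trans)
next
  case (cong ss f ts) then show ?case by (auto intro!: eqc.cong)
qed

definition sel3 :: "'f trm \<Rightarrow> 'f trm \<Rightarrow> 'f trm \<Rightarrow> nat \<Rightarrow> 'f trm" where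
  "sel3 a b c = (\<lambda>i. if i = 0 then a else if i = 1 then b else c)"
definition sel4 :: "'f trm \<Rightarrow> 'f trm \<Rightarrow> 'f trm \<Rightarrow> 'f trm \<Rightarrow> nat \<Rightarrow> 'f trm" where
  "sel4 a b c d = (\<lambda>i. if i = 0 then a else if i = 1 then b else if i = 2 then c else d)"

lemma app3_sel: "app3 T a b c = subst (sel3 a b c) T" by (simp add: app3_def sel3_def)
lemma app4_sel: "app4 T a b c d = subst (sel4 a b c d) T" by (simp add: app4_def sel4_def)

lemma subst_app3: "subst \<sigma> (app3 T a b c) = app3 T (subst \<sigma> a) (subst \<sigma> b) (subst \<sigma> c)"
  unfolding app3_def subst_subst by (rule arg_cong[where f="\<lambda>g. subst g T"]) auto

lemma subst_app4: "subst \<sigma> (app4 T a b c d) = app4 T (subst \<sigma> a) (subst \<sigma> b) (subst \<sigma> c) (subst \<sigma> d)"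
  unfolding app4_def subst_subst by (rule arg_cong[where f="\<lambda>g. subst g T"]) auto

lemma app4_app3: "app4 (app3 T a b c) p q r s = app3 T (app4 a p q r s) (app4 b p q r s) (app4 c p q r s)"
  unfolding app4_def by (rule subst_app3)

lemma app4_Var[simp]: "app4 (Var i) p q r s = (if i = 0 then p else if i = 1 then q else if i = 2 then r else s)"
  by (simp add: app4_def)

lemma inst3:
  assumes "eqc ar \<Sigma> s t" "wf_trm ar a" "wf_trm ar b" "wf_trm ar c"
  shows "eqc ar \<Sigma> (subst (sel3 a b c) s) (subst (sel3 a b c) t)"
  using assms by (intro eqc_subst) (auto simp: sel3_def)

lemma subst_sel3_app3: "subst (sel3 a b c) (app3 T vx vy vz) = app3 T a b c"
  by (simp add: subst_app3 sel3_def)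

lemma inst3_app:
  assumes "eqc ar \<Sigma> (app3 T vx vy vz) (app3 T' vx vy vz)" "wf_trm ar a" "wf_trm ar b" "wf_trm ar c"
  shows "eqc ar \<Sigma> (app3 T a b c) (app3 T' a b c)"
  using inst3[OF assms] unfolding subst_sel3_app3 .

lemma inst3_app_var:
  assumes "eqc ar \<Sigma> (app3 T vx vy vz) (Var i)" "wf_trm ar a" "wf_trm ar b" "wf_trm ar c"
  shows "eqc ar \<Sigma> (app3 T a b c) (sel3 a b c i)"
  using inst3[OF assms] unfolding subst_sel3_app3 subst.simps .

lemma kary_app3:
  assumes "kary ar 3 T" "kary ar k a" "kary ar k b" "kary ar k c"
  shows "kary ar k (app3 T a b c)"
proof -
  have "vars_trm (app3 T a b c) \<subseteq> {..<k}"
  proof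
    fix v assume "v \<in> vars_trm (app3 T a b c)"
    then obtain i where "i \<in> vars_trm T" "v \<in> vars_trm (sel3 a b c i)"
      by (auto simp: app3_sel vars_subst)
    then show "v \<in> {..<k}" using assms by (auto simp: kary_def sel3_def split: if_splits)
  qed
  moreover have "wf_trm ar (app3 T a b c)"
    using assms by (auto simp: app3_sel kary_def sel3_def intro!: wf_subst)
  ultimately show ?thesis by (simp add: kary_def)
qed

lemma eqc_wf:
  assumes "eqc ar \<Sigma> s t" "equational_theory ar \<Sigma>"
  shows "wf_trm ar s \<and> wf_trm ar t"
  using assms
proof (induction rule: eqc.induct)
  case (ax s t \<sigma>) then show ?case by (auto simp: equational_theory_def intro!: wf_subst)
next
  case (cong ss f ts)
  then show ?case by (auto simp: in_set_conv_nth)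
qed auto



lemma wfV[simp]: "wf_trm ar (Var i)" by simp

lemma karyV: "i < k \<Longrightarrow> kary ar k (Var i)" by (simp add: kary_def)


lemma eqc_refl_wf: "wf_trm ar t \<Longrightarrow> eqc ar \<Sigma> t t" by (rule eqc.refl)

definition Urev :: "(nat \<Rightarrow> 'f trm) \<Rightarrow> nat \<Rightarrow> nat \<Rightarrow> 'f trm" where
  "Urev t n k = (if k = 0 then vx else if k = 1 then app3 (t 1) vx vy vz
     else if k = 2*n-4 then app3 (t (n-1)) vy vz vw else if k = 2*n-3 then vw
     else app3 (t (k div 2 + 1)) vx (if even k = even (k div 2 + 1) then vy else vz) vw)"

lemma part1_rev:
  assumes al: "alvin_terms_except ar \<Sigma> n {1, n-1} t" and n: "even n" "4 \<le> n"
  shows "day_terms ar \<Sigma> True (2*n-3) (Urev t n)"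
proof -
  note defs = alvin_terms_except_def
  have kt: "\<And>h. h \<le> n \<Longrightarrow> kary ar 3 (t h)" using al by (auto simp: defs)
  have wt: "\<And>h. h \<le> n \<Longrightarrow> wf_trm ar (t h)" using kt by (auto simp: kary_def)
  have t0: "eqc ar \<Sigma> (app3 (t 0) vx vy vz) vx" using al by (auto simp: defs)
  have tn: "eqc ar \<Sigma> (app3 (t n) vx vy vz) vz" using al by (auto simp: defs)
  have ab: "\<And>h. h \<le> n \<Longrightarrow> h \<noteq> 1 \<Longrightarrow> h \<noteq> n-1 \<Longrightarrow> eqc ar \<Sigma> (app3 (t h) vx vy vx) vx"
    using al by (auto simp: defs)
  have ev: "\<And>h. h < n \<Longrightarrow> even h \<Longrightarrow> eqc ar \<Sigma> (app3 (t h) vx vz vz) (app3 (t (h+1)) vx vz vz)"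
    using al by (auto simp: defs)
  have od: "\<And>h. h < n \<Longrightarrow> odd h \<Longrightarrow> eqc ar \<Sigma> (app3 (t h) vx vx vz) (app3 (t (h+1)) vx vx vz)"
    using al by (auto simp: defs)
  have evI: "\<And>h a b. h < n \<Longrightarrow> even h \<Longrightarrow> wf_trm ar a \<Longrightarrow> wf_trm ar b \<Longrightarrow>
      eqc ar \<Sigma> (app3 (t h) a b b) (app3 (t (h+1)) a b b)"
  proof -
    fix h a b assume "h < n" "even h" "wf_trm ar a" "wf_trm ar b"
    from inst3[OF ev[OF this(1,2)], of a b b] this(3,4)
    show "eqc ar \<Sigma> (app3 (t h) a b b) (app3 (t (h+1)) a b b)"
      by (simp add: subst_app3 sel3_def)
  qed
  have odI: "\<And>h a b. h < n \<Longrightarrow> odd h \<Longrightarrow> wf_trm ar a \<Longrightarrow> wf_trm ar b \<Longrightarrow>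
      eqc ar \<Sigma> (app3 (t h) a a b) (app3 (t (h+1)) a a b)"
  proof -
    fix h a b assume "h < n" "odd h" "wf_trm ar a" "wf_trm ar b"
    from inst3[OF od[OF this(1,2)], of a a b] this(3,4)
    show "eqc ar \<Sigma> (app3 (t h) a a b) (app3 (t (h+1)) a a b)"
      by (simp add: subst_app3 sel3_def)
  qed
  have abI: "\<And>h a b. h \<le> n \<Longrightarrow> h \<noteq> 1 \<Longrightarrow> h \<noteq> n-1 \<Longrightarrow> wf_trm ar a \<Longrightarrow> wf_trm ar b \<Longrightarrow>
      eqc ar \<Sigma> (app3 (t h) a b a) a"
  proof -
    fix h a b assume "h \<le> n" "h \<noteq> 1" "h \<noteq> n-1" "wf_trm ar a" "wf_trm ar b"
    from inst3[OF ab[OF this(1,2,3)], of a b a] this(4,5)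
    show "eqc ar \<Sigma> (app3 (t h) a b a) a"
      by (simp add: subst_app3 sel3_def)
  qed
  have T1: "\<And>a b. wf_trm ar a \<Longrightarrow> wf_trm ar b \<Longrightarrow> eqc ar \<Sigma> (app3 (t 1) a b b) a"
  proof -
    fix a b :: "'a trm" assume w: "wf_trm ar a" "wf_trm ar b"
    have 1: "eqc ar \<Sigma> (app3 (t 0) a b b) (app3 (t 1) a b b)" using evI[of 0 a b] n w by simp
    have 2: "eqc ar \<Sigma> (app3 (t 0) a b b) a"
      using inst3[OF t0, of a b b] w by (simp add: subst_app3 sel3_def)
    show "eqc ar \<Sigma> (app3 (t 1) a b b) a" using 1 2 by (blast intro: eqc.sym eqc.trans)
  qed
  have TN: "\<And>a b. wf_trm ar a \<Longrightarrow> wf_trm ar b \<Longrightarrow> eqc ar \<Sigma> (app3 (t (n-1)) a a b) b"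
  proof -
    fix a b :: "'a trm" assume w: "wf_trm ar a" "wf_trm ar b"
    have "odd (n-1)" using n by simp
    then have 1: "eqc ar \<Sigma> (app3 (t (n-1)) a a b) (app3 (t n) a a b)" using odI[of "n-1" a b] n w by simp
    have 2: "eqc ar \<Sigma> (app3 (t n) a a b) b"
      using inst3[OF tn, of a a b] w by (simp add: subst_app3 sel3_def)
    show "eqc ar \<Sigma> (app3 (t (n-1)) a a b) b" using 1 2 by (blast intro: eqc.trans)
  qed
  let ?u = "Urev t n" let ?m = "2*n-3"
  have ka: "kary ar 4 (?u k)" if "k \<le> ?m" for k
  proof -
    have k4: "kary ar 4 vx" "kary ar 4 vy" "kary ar 4 vz" "kary ar 4 vw" by (auto intro: karyV)
    have "k div 2 + 1 \<le> n" using that n by auto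
    then show ?thesis using k4 n
      by (auto simp: Urev_def intro!: kary_app3 kt)
  qed
  have wu: "wf_trm ar (?u k)" if "k \<le> ?m" for k using ka[OF that] by (simp add: kary_def)
  have absorb: "eqc ar \<Sigma> (app4 (?u k) vx vy vy vx) vx" if km: "k \<le> ?m" for k
  proof -
    have "k = 0 \<or> k = 1 \<or> k = 2*n-4 \<or> k = 2*n-3 \<or> (2 \<le> k \<and> k \<le> 2*n-5)" using km n by arith
    then consider "k = 0" | "k = 1" | "k = 2*n-4" | "k = 2*n-3" | "2 \<le> k" "k \<le> 2*n-5" by blast
    then show ?thesis
    proof cases
      case 1 then show ?thesis by (simp add: Urev_def)
    next
      case 2 then show ?thesis using T1[of vx vy] by (simp add: Urev_def app4_app3)
    next
      case 3
      have "k \<noteq> 0" "k \<noteq> 1" using 3 n by auto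
      then show ?thesis using 3 TN[of vy vx] n by (simp add: Urev_def app4_app3)
    next
      case 4
      have "k \<noteq> 0" "k \<noteq> 1" "k \<noteq> 2*n-4" using 4 n by auto
      then show ?thesis using 4 n by (simp add: Urev_def)
    next
      case 5
      then have h: "k div 2 + 1 \<le> n" "k div 2 + 1 \<noteq> 1" "k div 2 + 1 \<noteq> n - 1" using n by auto
      have "k \<noteq> 0" "k \<noteq> 1" "k \<noteq> 2*n-4" "k \<noteq> 2*n-3" using 5 n by auto
      then show ?thesis using abI[OF h, of vx vy] by (simp add: Urev_def app4_app3)
    qed
  qed
  have first: "eqc ar \<Sigma> (app4 (?u 0) vx vy vz vw) vx" by (simp add: Urev_def)
  have last: "eqc ar \<Sigma> (app4 (?u ?m) vx vy vz vw) vw"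
  proof -
    have "?m \<noteq> 0" "?m \<noteq> 1" "?m \<noteq> 2*n-4" using n by auto
    then show ?thesis by (simp add: Urev_def)
  qed
  have linkB: "eqc ar \<Sigma> (app4 (?u k) vx vx vw vw) (app4 (?u (k+1)) vx vx vw vw)"
    if km: "k < ?m" "odd k" for k
  proof -
    obtain j p where jp: "k = 2*j+1" "n = 2*p" using km(2) n(1) by (metis oddE evenE)
    have "k = 1 \<or> k = 2*n-5 \<or> (3 \<le> k \<and> k \<le> 2*n-7)" using km n jp by arith
    then consider "k = 1" | "k = 2*n-5" | "3 \<le> k" "k \<le> 2*n-7" by blast
    then show ?thesis
    proof cases
      case 1
      have "2 \<noteq> 2*n-4" "2 \<noteq> 2*n-3" using n by auto
      then show ?thesis using 1 odI[of 1 vx vw] n by (simp add: Urev_def app4_app3)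
    next
      case 2
      have k: "k div 2 + 1 = n - 2" using 2 n by presburger
      have ne: "k \<noteq> 0" "k \<noteq> 1" "k \<noteq> 2*n-4" "k \<noteq> 2*n-3" "Suc k = 2*n-4" "odd k" "even (n-2)"
        "2*n-4 \<noteq> 0" "2*n-4 \<noteq> 1"
        using 2 n km by auto
      have e1: "app4 (?u k) vx vx vw vw = app3 (t (n-2)) vx vw vw"
        using ne k by (simp add: Urev_def app4_app3)
      have e2: "app4 (?u (k+1)) vx vx vw vw = app3 (t (n-1)) vx vw vw"
        using ne by (simp add: Urev_def app4_app3)
      have "n - 2 + 1 = n - 1" "n - 2 < n" using n by auto
      then show ?thesis unfolding e1 e2 using evI[of "n-2" vx vw] ne by simp
    next
      case 3
      obtain j where j: "k = 2*j+1" using km(2) by (metis oddE)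
      have kk: "k div 2 + 1 = j + 1" "Suc k div 2 + 1 = j + 2" using j by auto
      have ne: "k \<noteq> 0" "k \<noteq> 1" "k \<noteq> 2*n-4" "k \<noteq> 2*n-3" "Suc k \<noteq> 0" "Suc k \<noteq> 1" "Suc k \<noteq> 2*n-4" "Suc k \<noteq> 2*n-3"
        using 3 n by auto
      have hj: "j + 1 < n" using 3 j n by auto
      show ?thesis
      proof (cases "even j")
        case True
        then have "odd (j+1)" by simp
        then show ?thesis using odI[of "j+1" vx vw] hj ne kk j True
          by (simp add: Urev_def app4_app3)
      next
        case False
        then have "even (j+1)" by simp
        then show ?thesis using evI[of "j+1" vx vw] hj ne kk j False
          by (simp add: Urev_def app4_app3)
      qed
    qed
  qed
  have linkG: "eqc ar \<Sigma> (app4 (?u k) vx vy vy vw) (app4 (?u (k+1)) vx vy vy vw)"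
    if km: "k < ?m" "even k" for k
  proof -
    obtain j p where jp: "k = 2*j" "n = 2*p" using km(2) n(1) by (metis evenE)
    have "k = 0 \<or> k = 2*n-4 \<or> (2 \<le> k \<and> k \<le> 2*n-6)" using km n jp by arith
    then consider "k = 0" | "k = 2*n-4" | "2 \<le> k" "k \<le> 2*n-6" by blast
    then show ?thesis
    proof cases
      case 1
      then show ?thesis using T1[of vx vy] by (auto simp: Urev_def app4_app3 intro: eqc.sym)
    next
      case 2
      have "Suc k = 2*n-3" "k \<noteq> 0" "k \<noteq> 1" "2*n-3 \<noteq> 1" "2*n-3 \<noteq> 0" "2*n-3 \<noteq> 2*n-4" using 2 n by auto
      then show ?thesis using 2 TN[of vy vw] n by (simp add: Urev_def app4_app3)
    next
      case 3
      obtain j where j: "k = 2*j" using km(2) by (metis evenE)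
      have kk: "k div 2 + 1 = j + 1" "Suc k div 2 + 1 = j + 1" using j by auto
      have ne: "k \<noteq> 0" "k \<noteq> 1" "k \<noteq> 2*n-4" "k \<noteq> 2*n-3" "Suc k \<noteq> 0" "Suc k \<noteq> 1" "Suc k \<noteq> 2*n-4" "Suc k \<noteq> 2*n-3"
        using 3 n by auto
      have hj: "j + 1 \<le> n" using 3 j n by auto
      have w: "wf_trm ar (app3 (t (j+1)) vx vy vw)"
        using wt[OF hj] by (auto simp: app3_sel sel3_def intro!: wf_subst)
      show ?thesis using w ne kk j
        by (cases "even j") (auto simp: Urev_def app4_app3 intro: eqc.refl)
    qed
  qed
  show ?thesis unfolding day_terms_def
    using ka absorb first last linkB linkG by auto
qed

lemma rev_to_mod:
  assumes d: "day_terms ar \<Sigma> True m u"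
  shows "day_terms ar \<Sigma> False (Suc m) (\<lambda>k. if k = 0 then vx else u (k - 1))"
proof -
  let ?v = "\<lambda>k. if k = 0 then vx else u (k - 1)"
  have ka: "\<forall>k\<le>m. kary ar 4 (u k)" and ab: "\<forall>k\<le>m. eqc ar \<Sigma> (app4 (u k) vx vy vy vx) vx"
    and u0: "eqc ar \<Sigma> (app4 (u 0) vx vy vz vw) vx" and um: "eqc ar \<Sigma> (app4 (u m) vx vy vz vw) vw"
    and l1: "\<forall>k<m. odd k \<longrightarrow> eqc ar \<Sigma> (app4 (u k) vx vx vw vw) (app4 (u (k+1)) vx vx vw vw)"
    and l2: "\<forall>k<m. even k \<longrightarrow> eqc ar \<Sigma> (app4 (u k) vx vy vy vw) (app4 (u (k+1)) vx vy vy vw)"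
    using d by (auto simp: day_terms_def)
  have u0': "eqc ar \<Sigma> (app4 (u 0) vx vx vw vw) vx"
    using eqc_subst[OF u0, of "sel4 vx vx vw vw"] by (simp add: subst_app4 sel4_def)
  show ?thesis unfolding day_terms_def
  proof (intro conjI allI impI)
    fix k assume "k \<le> Suc m" then show "kary ar 4 (?v k)"
      using ka by (auto simp: kary_def)
  next
    fix k assume "k \<le> Suc m" then show "eqc ar \<Sigma> (app4 (?v k) vx vy vy vx) vx"
      using ab by auto
  next
    show "eqc ar \<Sigma> (app4 (?v 0) vx vy vz vw) vx" by simp
  next
    show "eqc ar \<Sigma> (app4 (?v (Suc m)) vx vy vz vw) vw" using um by simp
  next
    fix k assume k: "k < Suc m" "even k \<noteq> False"
    show "eqc ar \<Sigma> (app4 (?v k) vx vx vw vw) (app4 (?v (k+1)) vx vx vw vw)"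
    proof (cases k)
      case 0 then show ?thesis using u0' by (auto intro: eqc.sym)
    next
      case (Suc j) then show ?thesis using l1 k by auto
    qed
  next
    fix k assume k: "k < Suc m" "odd k \<noteq> False"
    show "eqc ar \<Sigma> (app4 (?v k) vx vy vy vw) (app4 (?v (k+1)) vx vy vy vw)"
    proof (cases k)
      case 0 then show ?thesis using k by auto
    next
      case (Suc j) then show ?thesis using l2 k by auto
    qed
  qed
qed

lemma part1:
  assumes "even n" "4 \<le> n" "n_gumm ar \<Sigma> n \<or> dd_alvin ar \<Sigma> n"
  shows "reversed_modular ar \<Sigma> (2 * n - 3) \<and> modular ar \<Sigma> (2 * n - 2)"
proof -
  obtain t where t: "alvin_terms_except ar \<Sigma> n {1, n-1} t"
    using assms(3) unfolding n_gumm_def dd_alvin_def alvin_terms_except_def by blast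
  have r: "day_terms ar \<Sigma> True (2*n-3) (Urev t n)" by (rule part1_rev[OF t assms(1,2)])
  have "Suc (2*n-3) = 2*n-2" using assms by auto
  then show ?thesis using r rev_to_mod[OF r] unfolding reversed_modular_def modular_def by metis
qed



datatype el = A | B | F | V int | E int

definition P :: "int \<Rightarrow> int \<Rightarrow> int \<Rightarrow> int \<Rightarrow> int" where
  "P a c m mm = (if a = c then a else if a < c then max a (min c m) else min a (max c mm))"
definition iV :: "nat \<Rightarrow> int \<Rightarrow> int" where
  "iV h b = (if (b < int h) = even h then int h - 1 else int h)"
definition iV' :: "nat \<Rightarrow> nat \<Rightarrow> int \<Rightarrow> int" where
  "iV' n h b = (if (int n - 1 - int h < b) = even h then int n - int h else int n - 1 - int h)"
definition iE :: "nat \<Rightarrow> int \<Rightarrow> int" where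
  "iE h b = (if even h then max (int h - 1) (min b (int h + 1)) else int h)"
definition iE' :: "nat \<Rightarrow> nat \<Rightarrow> int \<Rightarrow> int" where
  "iE' n h b = (if even h then min (int n - int h + 1) (max b (int n - int h - 1)) else int n - int h)"
definition posV :: "nat \<Rightarrow> nat \<Rightarrow> int \<Rightarrow> int \<Rightarrow> int \<Rightarrow> int" where
  "posV n h a b c = P a c (iV h b) (iV' n h b)"
definition posE :: "nat \<Rightarrow> nat \<Rightarrow> int \<Rightarrow> int \<Rightarrow> int \<Rightarrow> int" where
  "posE n h a b c = P a c (iE h b) (iE' n h b)"
definition posF :: "nat \<Rightarrow> nat \<Rightarrow> int \<Rightarrow> int \<Rightarrow> int" where
  "posF n h a c = P a c (int h) (int n - int h)"

lemma P_same[simp]: "P a a m mm = a" by (simp add: P_def)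

lemma V2: "0 \<le> a \<Longrightarrow> 0 \<le> c \<Longrightarrow> a < int n \<Longrightarrow> c < int n \<Longrightarrow> posV n 1 a c c = a"
  by (auto simp: posV_def P_def iV_def iV'_def)

lemma V3: "even h \<Longrightarrow> 2 \<le> h \<Longrightarrow> h + 2 \<le> n \<Longrightarrow> 0 \<le> a \<Longrightarrow> 0 \<le> c \<Longrightarrow> a < int n \<Longrightarrow> c < int n \<Longrightarrow>
  posV n h a c c = posV n (Suc h) a c c"
  by (auto simp: posV_def P_def iV_def iV'_def)

lemma V4: "odd h \<Longrightarrow> h + 3 \<le> n \<Longrightarrow> 0 \<le> a \<Longrightarrow> 0 \<le> c \<Longrightarrow> a < int n \<Longrightarrow> c < int n \<Longrightarrow>
  posV n h a a c = posV n (Suc h) a a c"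
  by (auto simp: posV_def P_def iV_def iV'_def)

lemma V5: "even n \<Longrightarrow> 2 \<le> n \<Longrightarrow> 0 \<le> a \<Longrightarrow> 0 \<le> c \<Longrightarrow> a < int n \<Longrightarrow> c < int n \<Longrightarrow>
  posV n (n - 1) a a c = c"
  by (auto simp: posV_def P_def iV_def iV'_def)

lemma E2: "1 \<le> a \<Longrightarrow> 1 \<le> c \<Longrightarrow> a < int n \<Longrightarrow> c < int n \<Longrightarrow> posE n 1 a c c = a"
  by (auto simp: posE_def P_def iE_def iE'_def)

lemma E3: "even h \<Longrightarrow> 2 \<le> h \<Longrightarrow> h + 2 \<le> n \<Longrightarrow> 1 \<le> a \<Longrightarrow> 1 \<le> c \<Longrightarrow> a < int n \<Longrightarrow> c < int n \<Longrightarrow>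
  posE n h a c c = posE n (Suc h) a c c"
  by (auto simp: posE_def P_def iE_def iE'_def)

lemma E4: "odd h \<Longrightarrow> h + 3 \<le> n \<Longrightarrow> 1 \<le> a \<Longrightarrow> 1 \<le> c \<Longrightarrow> a < int n \<Longrightarrow> c < int n \<Longrightarrow>
  posE n h a a c = posE n (Suc h) a a c"
  by (auto simp: posE_def P_def iE_def iE'_def)

lemma E5: "even n \<Longrightarrow> 2 \<le> n \<Longrightarrow> 1 \<le> a \<Longrightarrow> 1 \<le> c \<Longrightarrow> a < int n \<Longrightarrow> c < int n \<Longrightarrow>
  posE n (n - 1) a a c = c"
  by (auto simp: posE_def P_def iE_def iE'_def)

lemma V2s: "0 \<le> a \<Longrightarrow> 0 \<le> c \<Longrightarrow> a < int n \<Longrightarrow> c < int n \<Longrightarrow> posV n (Suc 0) a c c = a"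
  using V2 by simp
lemma E2s: "1 \<le> a \<Longrightarrow> 1 \<le> c \<Longrightarrow> a < int n \<Longrightarrow> c < int n \<Longrightarrow> posE n (Suc 0) a c c = a"
  using E2 by simp
lemma V5s: "even n \<Longrightarrow> 2 \<le> n \<Longrightarrow> 0 \<le> a \<Longrightarrow> 0 \<le> c \<Longrightarrow> a < int n \<Longrightarrow> c < int n \<Longrightarrow>
  posV n (n - Suc 0) a a c = c" using V5 by simp
lemma E5s: "even n \<Longrightarrow> 2 \<le> n \<Longrightarrow> 1 \<le> a \<Longrightarrow> 1 \<le> c \<Longrightarrow> a < int n \<Longrightarrow> c < int n \<Longrightarrow>
  posE n (n - Suc 0) a a c = c" using E5 by simp

fun isS :: "el \<Rightarrow> bool" where "isS A = True" | "isS B = True" | "isS _ = False"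
fun isV :: "el \<Rightarrow> bool" where "isV (V _) = True" | "isV _ = False"
fun isE2 :: "el \<Rightarrow> bool" where "isE2 F = True" | "isE2 (E _) = True" | "isE2 _ = False"
fun vo :: "el \<Rightarrow> int" where "vo (V i) = i" | "vo _ = 0"
fun eo :: "el \<Rightarrow> int" where "eo (E i) = i" | "eo _ = 0"

definition s1 :: "nat \<Rightarrow> nat \<Rightarrow> el \<Rightarrow> el \<Rightarrow> el \<Rightarrow> bool" where
  "s1 n h x y z \<longleftrightarrow> (x = A \<and> z = A \<and> (h \<noteq> 1 \<or> y = A)) \<or> (h = 1 \<and> x = A \<and> y = B \<and> z = B)
     \<or> (h = n - 1 \<and> x = B \<and> y = B \<and> z = A)"

definition t :: "nat \<Rightarrow> nat \<Rightarrow> el \<Rightarrow> el \<Rightarrow> el \<Rightarrow> el" where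
  "t n h x y z =
   (if isS x \<and> isS y \<and> isS z then (if s1 n h x y z then A else B)
    else if isV x \<and> isV y \<and> isV z then V (posV n h (vo x) (vo y) (vo z))
    else if isE2 x \<and> isE2 y \<and> isE2 z then
      (if x \<noteq> F \<and> y \<noteq> F \<and> z \<noteq> F then E (posE n h (eo x) (eo y) (eo z))
       else if x \<noteq> F \<and> y = F \<and> z \<noteq> F then (if h = 1 then F else E (posF n h (eo x) (eo z)))
       else if x \<noteq> F \<and> y = F \<and> z = F then (if h = 1 then x else F)
       else if x = F \<and> y = F \<and> z \<noteq> F then (if h = n - 1 then z else F)
       else F)
    else if x = z then x else if y = x \<and> h = n - 1 then z else x)"

fun inD :: "nat \<Rightarrow> el \<Rightarrow> bool" where
  "inD n (V i) = (0 \<le> i \<and> i < int n)"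
| "inD n (E j) = (1 \<le> j \<and> j < int n)"
| "inD n _ = True"

lemma Id1: "h \<noteq> 1 \<Longrightarrow> t n h x y x = x"
  by (cases x; cases y) (auto simp: t_def s1_def posV_def posE_def posF_def)

lemma Id2: "inD n x \<Longrightarrow> inD n z \<Longrightarrow> t n 1 x z z = x"
  by (cases x; cases z) (auto simp: t_def s1_def V2s E2s)

lemma Id3: "even h \<Longrightarrow> 2 \<le> h \<Longrightarrow> h + 2 \<le> n \<Longrightarrow> inD n x \<Longrightarrow> inD n z \<Longrightarrow>
   t n h x z z = t n (Suc h) x z z"
  by (cases x; cases z) (auto simp: t_def s1_def V3 E3)

lemma Id4: "odd h \<Longrightarrow> h + 3 \<le> n \<Longrightarrow> inD n x \<Longrightarrow> inD n z \<Longrightarrow>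
   t n h x x z = t n (Suc h) x x z"
  by (cases x; cases z) (auto simp: t_def s1_def V4 E4)

lemma Id5: "even n \<Longrightarrow> 2 \<le> n \<Longrightarrow> inD n x \<Longrightarrow> inD n z \<Longrightarrow> t n (n - 1) x x z = z"
  by (cases x; cases z) (auto simp: t_def s1_def V5s E5s)

definition inc :: "int \<Rightarrow> int \<Rightarrow> bool" where "inc i j \<longleftrightarrow> i \<le> j \<and> j \<le> i + 1"

lemma G: "inc i1 j1 \<Longrightarrow> inc i3 j3 \<Longrightarrow> inc m m' \<Longrightarrow> inc mm mm' \<Longrightarrow> inc (P i1 i3 m mm) (P j1 j3 m' mm')"
  unfolding inc_def P_def by (auto simp: max_def min_def)

lemma P_between: "min a c \<le> P a c m mm" "P a c m mm \<le> max a c"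
  unfolding P_def by auto

lemma incVE1: "inc b b' \<Longrightarrow> inc (iV h b) (iE h b')"
  unfolding inc_def iV_def iE_def by auto
lemma incVE2: "inc b b' \<Longrightarrow> inc (iV' n h b) (iE' n h b')"
  unfolding inc_def iV'_def iE'_def by auto
lemma incVF1: "inc (iV h b) (int h)"
  unfolding inc_def iV_def by auto
lemma incVF2: "inc (iV' n h b) (int n - int h)"
  unfolding inc_def iV'_def by auto

lemma L3: "0 \<le> i1 \<Longrightarrow> i1 < int n \<Longrightarrow> 0 \<le> q \<Longrightarrow> q < int n \<Longrightarrow> 0 \<le> q' \<Longrightarrow> q' < int n \<Longrightarrow>
  inc i1 j1 \<Longrightarrow> 1 \<le> j1 \<Longrightarrow> j1 < int n \<Longrightarrow> inc (posV n 1 i1 q q') j1"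
  unfolding inc_def posV_def P_def iV_def iV'_def by auto

lemma L4: "even n \<Longrightarrow> 2 \<le> n \<Longrightarrow> 0 \<le> i3 \<Longrightarrow> i3 < int n \<Longrightarrow> 0 \<le> q \<Longrightarrow> q < int n \<Longrightarrow> 0 \<le> q' \<Longrightarrow> q' < int n \<Longrightarrow>
  inc i3 j3 \<Longrightarrow> 1 \<le> j3 \<Longrightarrow> j3 < int n \<Longrightarrow> inc (posV n (n - 1) q q' i3) j3"
  unfolding inc_def posV_def P_def iV_def iV'_def by auto

definition RI :: "nat \<Rightarrow> el \<Rightarrow> el \<Rightarrow> el \<Rightarrow> bool" where
  "RI n s v e \<longleftrightarrow> (s = A \<and> (\<exists>i j. v = V i \<and> e = E j \<and> 0 \<le> i \<and> i < int n \<and> 1 \<le> j \<and> j < int n \<and> inc i j))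
     \<or> (s = B \<and> e = F \<and> (\<exists>i. v = V i \<and> 0 \<le> i \<and> i < int n))"

lemma RI_cases:
  assumes "RI n s v e"
  obtains (a) i j where "s = A" "v = V i" "e = E j" "0 \<le> i" "i < int n" "1 \<le> j" "j < int n" "inc i j"
  | (b) i where "s = B" "v = V i" "e = F" "0 \<le> i" "i < int n"
  using assms unfolding RI_def by blast

lemma rng: "lo \<le> a \<Longrightarrow> lo \<le> c \<Longrightarrow> a < u \<Longrightarrow> c < u \<Longrightarrow> lo \<le> P a c m mm \<and> P a c m mm < u"
  using P_between[of a c m mm] by linarith

lemma RI_pres:
  assumes x: "RI n x1 x2 x3" and y: "RI n y1 y2 y3" and z: "RI n z1 z2 z3"
    and h: "1 \<le> h" "h < n" and n: "even n"
  shows "RI n (t n h x1 y1 z1) (t n h x2 y2 z2) (t n h x3 y3 z3)"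
proof -
  have n2: "2 \<le> n" using h n by presburger
  show ?thesis
  using x
  proof (cases rule: RI_cases)
    case xa: (a i1 j1)
    show ?thesis using y
    proof (cases rule: RI_cases)
      case ya: (a i2 j2)
      show ?thesis using z
      proof (cases rule: RI_cases)
        case za: (a i3 j3)
        have "inc (posV n h i1 i2 i3) (posE n h j1 j2 j3)"
          unfolding posV_def posE_def using xa ya za by (intro G incVE1 incVE2) auto
        moreover have "0 \<le> posV n h i1 i2 i3 \<and> posV n h i1 i2 i3 < int n"
          unfolding posV_def using xa za by (intro rng) auto
        moreover have "1 \<le> posE n h j1 j2 j3 \<and> posE n h j1 j2 j3 < int n"
          unfolding posE_def using xa za by (intro rng) auto
        ultimately show ?thesis using xa ya za by (simp add: t_def s1_def RI_def)
      next
        case zb: (b i3)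
        have "0 \<le> posV n h i1 i2 i3 \<and> posV n h i1 i2 i3 < int n"
          unfolding posV_def using xa zb by (intro rng) auto
        then show ?thesis using xa ya zb by (simp add: t_def s1_def RI_def)
      qed
    next
      case yb: (b i2)
      show ?thesis using z
      proof (cases rule: RI_cases)
        case za: (a i3 j3)
        have r: "0 \<le> posV n h i1 i2 i3 \<and> posV n h i1 i2 i3 < int n"
          unfolding posV_def using xa za by (intro rng) auto
        show ?thesis
        proof (cases "h = 1")
          case True then show ?thesis using xa yb za r by (simp add: t_def s1_def RI_def)
        next
          case False
          have "inc (posV n h i1 i2 i3) (posF n h j1 j3)"
            unfolding posV_def posF_def using xa za by (intro G incVF1 incVF2) auto
          moreover have "1 \<le> posF n h j1 j3 \<and> posF n h j1 j3 < int n"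
            unfolding posF_def using xa za by (intro rng) auto
          ultimately show ?thesis using xa yb za r False by (simp add: t_def s1_def RI_def)
        qed
      next
        case zb: (b i3)
        have r: "0 \<le> posV n h i1 i2 i3 \<and> posV n h i1 i2 i3 < int n"
          unfolding posV_def using xa zb by (intro rng) auto
        show ?thesis
        proof (cases "h = 1")
          case True
          have "inc (posV n 1 i1 i2 i3) j1" using xa yb zb by (intro L3) auto
          then show ?thesis using xa yb zb r True by (simp add: t_def s1_def RI_def)
        next
          case False then show ?thesis using xa yb zb r by (simp add: t_def s1_def RI_def)
        qed
      qed
    qed
  next
    case xb: (b i1)
    show ?thesis using y
    proof (cases rule: RI_cases)
      case ya: (a i2 j2)
      show ?thesis using z
      proof (cases rule: RI_cases)
        case za: (a i3 j3)
        have r: "0 \<le> posV n h i1 i2 i3 \<and> posV n h i1 i2 i3 < int n"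
          unfolding posV_def using xb za by (intro rng) auto
        then show ?thesis using xb ya za by (simp add: t_def s1_def RI_def)
      next
        case zb: (b i3)
        have r: "0 \<le> posV n h i1 i2 i3 \<and> posV n h i1 i2 i3 < int n"
          unfolding posV_def using xb zb by (intro rng) auto
        then show ?thesis using xb ya zb by (simp add: t_def s1_def RI_def)
      qed
    next
      case yb: (b i2)
      show ?thesis using z
      proof (cases rule: RI_cases)
        case za: (a i3 j3)
        have r: "0 \<le> posV n h i1 i2 i3 \<and> posV n h i1 i2 i3 < int n"
          unfolding posV_def using xb za by (intro rng) auto
        show ?thesis
        proof (cases "h = n - 1")
          case True
          have "inc (posV n (n - 1) i1 i2 i3) j3" using xb yb za n n2 by (intro L4) auto
          then show ?thesis using xb yb za r True by (simp add: t_def s1_def RI_def)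
        next
          case False then show ?thesis using xb yb za r by (simp add: t_def s1_def RI_def)
        qed
      next
        case zb: (b i3)
        have r: "0 \<le> posV n h i1 i2 i3 \<and> posV n h i1 i2 i3 < int n"
          unfolding posV_def using xb zb by (intro rng) auto
        then show ?thesis using xb yb zb by (simp add: t_def s1_def RI_def)
      qed
    qed
  qed
qed



definition I :: "nat \<Rightarrow> nat \<Rightarrow> el list \<Rightarrow> el" where
  "I n f xs = (case xs of [x, y, z] \<Rightarrow> (if 1 \<le> f \<and> f < n then t n f x y z else x) | _ \<Rightarrow> A)"

fun ev :: "nat \<Rightarrow> (nat \<Rightarrow> el) \<Rightarrow> nat trm \<Rightarrow> el" where
  "ev n \<rho> (Var i) = \<rho> i"
| "ev n \<rho> (Fun f ts) = I n f (map (ev n \<rho>) ts)"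

definition ar3 :: "nat \<Rightarrow> nat" where "ar3 = (\<lambda>_. 3)"

definition Sg :: "nat \<Rightarrow> (nat trm \<times> nat trm) set" where
  "Sg n = {(s, u). wf_trm ar3 s \<and> wf_trm ar3 u \<and> (\<forall>\<rho>. (\<forall>i. inD n (\<rho> i)) \<longrightarrow> ev n \<rho> s = ev n \<rho> u)}"

lemma rngV: "0 \<le> a \<Longrightarrow> 0 \<le> c \<Longrightarrow> a < int n \<Longrightarrow> c < int n \<Longrightarrow> 0 \<le> posV n h a b c \<and> posV n h a b c < int n"
  unfolding posV_def by (rule rng)
lemma rngE: "1 \<le> a \<Longrightarrow> 1 \<le> c \<Longrightarrow> a < int n \<Longrightarrow> c < int n \<Longrightarrow> 1 \<le> posE n h a b c \<and> posE n h a b c < int n"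
  unfolding posE_def by (rule rng)
lemma rngF: "1 \<le> a \<Longrightarrow> 1 \<le> c \<Longrightarrow> a < int n \<Longrightarrow> c < int n \<Longrightarrow> 1 \<le> posF n h a c \<and> posF n h a c < int n"
  unfolding posF_def by (rule rng)

lemma vo_rng: "isV x \<Longrightarrow> inD n x \<Longrightarrow> 0 \<le> vo x \<and> vo x < int n"
  by (cases x) auto
lemma eo_rng: "isE2 x \<Longrightarrow> x \<noteq> F \<Longrightarrow> inD n x \<Longrightarrow> 1 \<le> eo x \<and> eo x < int n"
  by (cases x) auto

lemma t_shape: "t n h x y z \<in> {x, y, z, A, B, F} \<or>
   (isV x \<and> isV z \<and> t n h x y z = V (posV n h (vo x) (vo y) (vo z))) \<or>
   (isE2 x \<and> isE2 z \<and> x \<noteq> F \<and> z \<noteq> F \<and> (t n h x y z = E (posE n h (eo x) (eo y) (eo z)) \<or> t n h x y z = E (posF n h (eo x) (eo z))))"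
  unfolding t_def by auto

lemma t_inD: assumes "inD n x" "inD n y" "inD n z" shows "inD n (t n h x y z)"
proof -
  have v: "isV x \<Longrightarrow> isV z \<Longrightarrow> inD n (V (posV n h (vo x) (vo y) (vo z)))"
    using vo_rng[of x n] vo_rng[of z n] assms rngV[of "vo x" "vo z" n h "vo y"] by auto
  have e: "isE2 x \<Longrightarrow> isE2 z \<Longrightarrow> x \<noteq> F \<Longrightarrow> z \<noteq> F \<Longrightarrow> inD n (E (posE n h (eo x) (eo y) (eo z)))"
    using eo_rng[of x n] eo_rng[of z n] assms rngE[of "eo x" "eo z" n h "eo y"] by auto
  have f: "isE2 x \<Longrightarrow> isE2 z \<Longrightarrow> x \<noteq> F \<Longrightarrow> z \<noteq> F \<Longrightarrow> inD n (E (posF n h (eo x) (eo z)))"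
    using eo_rng[of x n] eo_rng[of z n] assms rngF[of "eo x" "eo z" n h] by auto
  show ?thesis using t_shape[of n h x y z] v e f assms by auto
qed

lemma I_inD: "\<forall>x\<in>set xs. inD n x \<Longrightarrow> inD n (I n f xs)"
  unfolding I_def by (auto split: list.split intro: t_inD)

lemma ev_inD: "(\<And>i. inD n (\<rho> i)) \<Longrightarrow> inD n (ev n \<rho> u)"
  by (induction u) (auto intro!: I_inD)

lemma ev_subst: "ev n \<rho> (subst \<sigma> u) = ev n (\<lambda>i. ev n \<rho> (\<sigma> i)) u"
proof (induction u)
  case (Var x) then show ?case by simp
next
  case (Fun f ts)
  then have "map (\<lambda>x. ev n \<rho> (subst \<sigma> x)) ts = map (ev n (\<lambda>i. ev n \<rho> (\<sigma> i))) ts" by auto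
  then show ?case by (simp add: comp_def del: map_eq_conv)
qed

lemma ev_cong: "(\<And>i. i \<in> vars_trm u \<Longrightarrow> \<rho> i = \<rho>' i) \<Longrightarrow> ev n \<rho> u = ev n \<rho>' u"
proof (induction u)
  case (Var x) then show ?case by simp
next
  case (Fun f ts)
  then have "map (ev n \<rho>) ts = map (ev n \<rho>') ts" by auto
  then show ?case by (simp del: map_eq_conv)
qed

lemma sound:
  assumes "eqc ar3 (Sg n) s u" "\<And>i. inD n (\<rho> i)"
  shows "ev n \<rho> s = ev n \<rho> u"
  using assms
proof (induction arbitrary: \<rho> rule: eqc.induct)
  case (ax s u \<sigma>)
  have "\<And>i. inD n (ev n \<rho> (\<sigma> i))" using ax by (auto intro: ev_inD)
  then show ?case using ax by (simp add: ev_subst Sg_def)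
next
  case (cong ss f ts)
  then have "map (ev n \<rho>) ss = map (ev n \<rho>) ts" by (auto intro: nth_equalityI)
  then show ?case by simp
qed auto

lemma complete:
  assumes "wf_trm ar3 s" "wf_trm ar3 u" "\<And>\<rho>. (\<And>i. inD n (\<rho> i)) \<Longrightarrow> ev n \<rho> s = ev n \<rho> u"
  shows "eqc ar3 (Sg n) s u"
proof -
  have "(s, u) \<in> Sg n" using assms by (auto simp: Sg_def)
  from eqc.ax[OF this, where \<sigma>=Var] show ?thesis by (simp add: subst_Var)
qed

lemma et: "equational_theory ar3 (Sg n)" by (auto simp: equational_theory_def Sg_def)



definition gt :: "nat \<Rightarrow> nat \<Rightarrow> nat trm" where
  "gt n h = (if h = 0 then Var 0 else if h = n then Var 2 else Fun h [Var 0, Var 1, Var 2])"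

lemma wf3[simp]: "wf_trm ar3 (Fun h [a, b, c]) \<longleftrightarrow> wf_trm ar3 a \<and> wf_trm ar3 b \<and> wf_trm ar3 c"
  by (auto simp: ar3_def)

lemma ev3: "1 \<le> h \<Longrightarrow> h < n \<Longrightarrow> ev n \<rho> (Fun h [a, b, c]) = t n h (ev n \<rho> a) (ev n \<rho> b) (ev n \<rho> c)"
  by (simp add: I_def)

lemma Id2s: "inD n x \<Longrightarrow> inD n z \<Longrightarrow> t n (Suc 0) x z z = x" using Id2 by simp
lemma Id5s: "even n \<Longrightarrow> 2 \<le> n \<Longrightarrow> inD n x \<Longrightarrow> inD n z \<Longrightarrow> t n (n - Suc 0) x x z = z" using Id5 by simp

lemma gumm_model:
  assumes n: "even n" "2 \<le> n"
  shows "alvin_terms_except ar3 (Sg n) n {1} (gt n)"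
proof -
  have kt: "kary ar3 3 (gt n h)" for h by (auto simp: gt_def kary_def ar3_def)
  have t0: "eqc ar3 (Sg n) (app3 (gt n 0) vx vy vz) vx" by (simp add: gt_def app3_def)
  have tn: "eqc ar3 (Sg n) (app3 (gt n n) vx vy vz) vz" using n by (simp add: gt_def app3_def)
  have ab: "eqc ar3 (Sg n) (app3 (gt n h) vx vy vx) vx" if hh: "h \<le> n" "h \<noteq> 1" for h
  proof -
    consider "h = 0" | "h = n" | "1 \<le> h" "h < n" using hh by linarith
    then show ?thesis
    proof cases
      case 3
      then have "h \<noteq> 0" "h \<noteq> n" by auto
      then show ?thesis using 3 hh
        by (intro complete) (auto simp: gt_def app3_def ar3_def I_def Id1)
    qed (auto simp: gt_def app3_def)
  qed
  have ev: "eqc ar3 (Sg n) (app3 (gt n h) vx vz vz) (app3 (gt n (h+1)) vx vz vz)" if "h < n" "even h" for h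
  proof (cases "h = 0")
    case True
    have "1 \<noteq> n" using n by auto
    then show ?thesis using True n
      by (intro complete) (auto simp: gt_def app3_def ar3_def I_def Id2s)
  next
    case False
    then have h: "2 \<le> h" "h + 2 \<le> n" "h \<noteq> n" "Suc h \<noteq> n" "Suc h \<noteq> 0" using that n by (auto, presburger+)
    then show ?thesis using that False
      by (intro complete) (auto simp: gt_def app3_def ar3_def I_def Id3)
  qed
  have od: "eqc ar3 (Sg n) (app3 (gt n h) vx vx vz) (app3 (gt n (h+1)) vx vx vz)" if "h < n" "odd h" for h
  proof (cases "h + 1 = n")
    case True
    then have "h = n - 1" "h \<noteq> 0" "h \<noteq> n" using that by (auto elim: oddE)
    then show ?thesis using True n
      by (intro complete) (auto simp: gt_def app3_def ar3_def I_def Id5s Id5)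
  next
    case False
    then have h: "h + 3 \<le> n" "h \<noteq> n" "Suc h \<noteq> n" "h \<noteq> 0" "1 \<le> h" using that n by (auto, presburger+)
    then show ?thesis using that False
      by (intro complete) (auto simp: gt_def app3_def ar3_def I_def Id4)
  qed
  show ?thesis unfolding alvin_terms_except_def using kt t0 tn ab ev od by auto
qed



lemma finite_D: "finite {x. inD n x}"
proof -
  have "{x. inD n x} \<subseteq> {A, B, F} \<union> V ` {0..<int n} \<union> E ` {1..<int n}"
  proof
    fix x assume "x \<in> {x. inD n x}" then show "x \<in> {A, B, F} \<union> V ` {0..<int n} \<union> E ` {1..<int n}"
      by (cases x) auto
  qed
  then show ?thesis by (rule finite_subset) auto
qed

lemma lf: "locally_finite ar3 (Sg n)"
  unfolding locally_finite_def
proof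
  fix k
  define Dn where "Dn = {x. inD n x}"
  define L where "L = {xs :: el list. set xs \<subseteq> Dn \<and> length xs = k}"
  define val where "val xs = (\<lambda>i. if i < k then xs ! i else A)" for xs :: "el list"
  define sem where "sem s = (\<lambda>xs. if xs \<in> L then ev n (val xs) s else undefined)" for s
  have fL: "finite L" unfolding L_def using finite_lists_length_eq[OF finite_D[of n]] Dn_def by simp
  have valD: "xs \<in> L \<Longrightarrow> inD n (val xs i)" for xs i
    by (auto simp: L_def val_def Dn_def dest!: nth_mem)
  have key: "eqc ar3 (Sg n) s u \<longleftrightarrow> sem s = sem u" if s: "kary ar3 k s" and u: "kary ar3 k u" for s u
  proof
    assume "eqc ar3 (Sg n) s u"
    then show "sem s = sem u" unfolding sem_def using sound valD by (intro ext) auto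
  next
    assume su: "sem s = sem u"
    show "eqc ar3 (Sg n) s u"
    proof (rule complete)
      show "wf_trm ar3 s" "wf_trm ar3 u" using s u by (auto simp: kary_def)
    next
      fix \<rho> :: "nat \<Rightarrow> el" assume \<rho>: "\<And>i. inD n (\<rho> i)"
      define xs where "xs = map \<rho> [0..<k]"
      have xL: "xs \<in> L" using \<rho> by (auto simp: xs_def L_def Dn_def)
      have e: "ev n \<rho> w = ev n (val xs) w" if "kary ar3 k w" for w
        using that by (intro ev_cong) (auto simp: kary_def val_def xs_def)
      have "ev n (val xs) s = ev n (val xs) u" using fun_cong[OF su, of xs] xL by (simp add: sem_def)
      then show "ev n \<rho> s = ev n \<rho> u" using e[OF s] e[OF u] by simp
    qed
  qed
  have sub: "(\<lambda>t. {s. kary ar3 k s \<and> eqc ar3 (Sg n) s t}) ` {t. kary ar3 k t}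
      \<subseteq> (\<lambda>g. {s. kary ar3 k s \<and> sem s = g}) ` (PiE L (\<lambda>_. Dn))"
  proof
    fix X assume "X \<in> (\<lambda>t. {s. kary ar3 k s \<and> eqc ar3 (Sg n) s t}) ` {t. kary ar3 k t}"
    then obtain t where t: "kary ar3 k t" and X: "X = {s. kary ar3 k s \<and> eqc ar3 (Sg n) s t}" by auto
    have "X = {s. kary ar3 k s \<and> sem s = sem t}" unfolding X using key t by auto
    moreover have "sem t \<in> PiE L (\<lambda>_. Dn)"
      unfolding sem_def using valD by (auto simp: Dn_def intro!: ev_inD)
    ultimately show "X \<in> (\<lambda>g. {s. kary ar3 k s \<and> sem s = g}) ` (PiE L (\<lambda>_. Dn))" by blast
  qed
  have "finite (PiE L (\<lambda>_. Dn))" using fL finite_D by (auto simp: Dn_def intro: finite_PiE)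
  then show "finite ((\<lambda>t. {s. kary ar3 k s \<and> eqc ar3 (Sg n) s t}) ` {t. kary ar3 k t})"
    using sub by (meson finite_imageI finite_subset)
qed



definition val4 :: "el \<Rightarrow> el \<Rightarrow> el \<Rightarrow> el \<Rightarrow> nat \<Rightarrow> el" where
  "val4 a b c d = (\<lambda>i. if i = 0 then a else if i = 1 then b else if i = 2 then c else d)"

lemma ev_app4: "ev n \<rho> (app4 U a b c d) = ev n (val4 (ev n \<rho> a) (ev n \<rho> b) (ev n \<rho> c) (ev n \<rho> d)) U"
proof -
  have "(\<lambda>i. ev n \<rho> (sel4 a b c d i)) = val4 (ev n \<rho> a) (ev n \<rho> b) (ev n \<rho> c) (ev n \<rho> d)"
    by (auto simp: sel4_def val4_def)
  then show ?thesis by (simp add: app4_sel ev_subst)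
qed

lemma val4_inD: "inD n a \<Longrightarrow> inD n b \<Longrightarrow> inD n c \<Longrightarrow> inD n d \<Longrightarrow> inD n (val4 a b c d i)"
  by (simp add: val4_def)

lemma val4_self: "val4 (val4 a b c d 0) (val4 a b c d 1) (val4 a b c d 2) (val4 a b c d 3) = val4 a b c d"
  by (auto simp: val4_def)

lemma inv:
  assumes n: "even n" "2 \<le> n" and w: "wf_trm ar3 U"
  shows "RI n (ev n (val4 A B B A) U) (ev n (val4 (V 0) (V 0) (V (int n - 1)) (V (int n - 1))) U)
              (ev n (val4 (E 1) F F (E (int n - 1))) U)"
  using w
proof (induction U)
  case (Var i)
  then show ?case using n by (auto simp: val4_def RI_def inc_def)
next
  case (Fun f ts)
  then have "length ts = 3" by (simp add: ar3_def)
  then obtain a b c where ts: "ts = [a, b, c]"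
    by (auto simp: numeral_3_eq_3 length_Suc_conv)
  have IH: "RI n (ev n (val4 A B B A) x) (ev n (val4 (V 0) (V 0) (V (int n - 1)) (V (int n - 1))) x)
              (ev n (val4 (E 1) F F (E (int n - 1))) x)" if "x \<in> set ts" for x
    using Fun that by auto
  show ?case
  proof (cases "1 \<le> f \<and> f < n")
    case True
    then show ?thesis using IH RI_pres[OF IH IH IH] n ts by (auto simp: I_def intro!: RI_pres)
  next
    case False
    then show ?thesis using IH ts by (auto simp: I_def)
  qed
qed

lemma not_mod:
  assumes n: "even n" "2 \<le> n"
  shows "\<not> modular ar3 (Sg n) (2 * n - 3)"
proof
  assume "modular ar3 (Sg n) (2 * n - 3)"
  then obtain u where d: "day_terms ar3 (Sg n) False (2*n-3) u" by (auto simp: modular_def)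
  define m where "m = 2*n-3"
  have ka: "\<forall>k\<le>m. kary ar3 4 (u k)" and ab: "\<forall>k\<le>m. eqc ar3 (Sg n) (app4 (u k) vx vy vy vx) vx"
    and u0: "eqc ar3 (Sg n) (app4 (u 0) vx vy vz vw) vx" and um: "eqc ar3 (Sg n) (app4 (u m) vx vy vz vw) vw"
    and l1: "\<forall>k<m. even k \<longrightarrow> eqc ar3 (Sg n) (app4 (u k) vx vx vw vw) (app4 (u (k+1)) vx vx vw vw)"
    and l2: "\<forall>k<m. odd k \<longrightarrow> eqc ar3 (Sg n) (app4 (u k) vx vy vy vw) (app4 (u (k+1)) vx vy vy vw)"
    using d by (auto simp: day_terms_def m_def)
  define N where "N = int n - 1"
  define \<rho>1 where "\<rho>1 = val4 A B B A"
  define \<rho>2 where "\<rho>2 = val4 (V 0) (V 0) (V N) (V N)"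
  define \<rho>3 where "\<rho>3 = val4 (E 1) F F (E N)"
  have D1: "\<And>i. inD n (\<rho>1 i)" and D2: "\<And>i. inD n (\<rho>2 i)" and D3: "\<And>i. inD n (\<rho>3 i)"
    using n by (auto simp: \<rho>1_def \<rho>2_def \<rho>3_def N_def val4_def)
  have RIk: "RI n (ev n \<rho>1 (u k)) (ev n \<rho>2 (u k)) (ev n \<rho>3 (u k))" if "k \<le> m" for k
    using inv[OF n, of "u k"] ka that by (auto simp: kary_def \<rho>1_def \<rho>2_def \<rho>3_def N_def)
  have c1: "ev n \<rho>1 (u k) = A" if "k \<le> m" for k
  proof -
    have "ev n \<rho>1 (app4 (u k) vx vy vy vx) = ev n \<rho>1 vx" using sound[OF ab[rule_format, OF that] D1] .
    then show ?thesis by (simp add: ev_app4 \<rho>1_def val4_def)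
  qed
  define iv where "iv k = vo (ev n \<rho>2 (u k))" for k
  define jv where "jv k = eo (ev n \<rho>3 (u k))" for k
  have incs: "inc (iv k) (jv k)" if "k \<le> m" for k
    using RIk[OF that] c1[OF that] by (auto simp: RI_def iv_def jv_def)
  have i0: "iv 0 = 0" and j0: "jv 0 = 1"
  proof -
    have "ev n \<rho>2 (app4 (u 0) vx vy vz vw) = ev n \<rho>2 vx" using sound[OF u0 D2] .
    then show "iv 0 = 0" by (simp add: ev_app4 iv_def \<rho>2_def val4_def)
    have "ev n \<rho>3 (app4 (u 0) vx vy vz vw) = ev n \<rho>3 vx" using sound[OF u0 D3] .
    then show "jv 0 = 1" by (simp add: ev_app4 jv_def \<rho>3_def val4_def)
  qed
  have im: "iv m = N"
  proof -
    have "ev n \<rho>2 (app4 (u m) vx vy vz vw) = ev n \<rho>2 vw" using sound[OF um D2] .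
    then show ?thesis by (simp add: ev_app4 iv_def \<rho>2_def val4_def)
  qed
  have lb: "iv (Suc k) = iv k" if "k < m" "even k" for k
  proof -
    have "ev n \<rho>2 (app4 (u k) vx vx vw vw) = ev n \<rho>2 (app4 (u (k+1)) vx vx vw vw)"
      using sound[OF l1[rule_format, OF that] D2] by simp
    then show ?thesis by (simp add: ev_app4 iv_def \<rho>2_def val4_def)
  qed
  have lg: "jv (Suc k) = jv k" if "k < m" "odd k" for k
  proof -
    have "ev n \<rho>3 (app4 (u k) vx vy vy vw) = ev n \<rho>3 (app4 (u (k+1)) vx vy vy vw)"
      using sound[OF l2[rule_format, OF that] D3] by simp
    then show ?thesis by (simp add: ev_app4 jv_def \<rho>3_def val4_def)
  qed
  have Q: "k \<le> m \<longrightarrow> (even k \<longrightarrow> 2 * iv k \<le> int k \<and> 2 * jv k \<le> int k + 2) \<and>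
                 (odd k \<longrightarrow> 2 * iv k \<le> int k - 1 \<and> 2 * jv k \<le> int k + 1)" for k
  proof (induction k)
    case 0 then show ?case using i0 j0 by simp
  next
    case (Suc k)
    show ?case
    proof
      assume km: "Suc k \<le> m"
      then have k: "k < m" by simp
      have ih: "(even k \<longrightarrow> 2 * iv k \<le> int k \<and> 2 * jv k \<le> int k + 2) \<and>
                 (odd k \<longrightarrow> 2 * iv k \<le> int k - 1 \<and> 2 * jv k \<le> int k + 1)" using Suc k by simp
      have ic: "inc (iv (Suc k)) (jv (Suc k))" using incs km by blast
      show "(even (Suc k) \<longrightarrow> 2 * iv (Suc k) \<le> int (Suc k) \<and> 2 * jv (Suc k) \<le> int (Suc k) + 2) \<and>
                 (odd (Suc k) \<longrightarrow> 2 * iv (Suc k) \<le> int (Suc k) - 1 \<and> 2 * jv (Suc k) \<le> int (Suc k) + 1)"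
      proof (cases "even k")
        case True
        then show ?thesis using ih ic lb[OF k True] by (auto simp: inc_def)
      next
        case False
        then show ?thesis using ih ic lg[OF k] by (auto simp: inc_def)
      qed
    qed
  qed
  have "odd m" using n by (simp add: m_def)
  then have "2 * iv m \<le> int m - 1" using Q[of m] by simp
  moreover have "int m = 2 * int n - 3" using n by (simp add: m_def)
  ultimately show False using im N_def by simp
qed


theorem proposition6p5:
  shows "(\<forall>(ar :: 'f \<Rightarrow> nat) \<Sigma> n.
            equational_theory ar \<Sigma> \<longrightarrow> even n \<longrightarrow> n \<ge> 4 \<longrightarrow>
            (n_gumm ar \<Sigma> n \<or> dd_alvin ar \<Sigma> n) \<longrightarrow>
            reversed_modular ar \<Sigma> (2 * n - 3) \<and> modular ar \<Sigma> (2 * n - 2))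
       \<and> (\<forall>n. even n \<and> n \<ge> 2 \<longrightarrow>
            (\<exists>(ar :: nat \<Rightarrow> nat) \<Sigma>. equational_theory ar \<Sigma> \<and> locally_finite ar \<Sigma> \<and>
               dd_alvin ar \<Sigma> n \<and> n_gumm ar \<Sigma> n \<and> \<not> modular ar \<Sigma> (2 * n - 3)))"
proof (rule conjI)
  show "\<forall>(ar :: 'f \<Rightarrow> nat) \<Sigma> n.
            equational_theory ar \<Sigma> \<longrightarrow> even n \<longrightarrow> n \<ge> 4 \<longrightarrow>
            (n_gumm ar \<Sigma> n \<or> dd_alvin ar \<Sigma> n) \<longrightarrow>
            reversed_modular ar \<Sigma> (2 * n - 3) \<and> modular ar \<Sigma> (2 * n - 2)"
    using part1 by blast
next
  show "\<forall>n. even n \<and> n \<ge> 2 \<longrightarrow>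
            (\<exists>(ar :: nat \<Rightarrow> nat) \<Sigma>. equational_theory ar \<Sigma> \<and> locally_finite ar \<Sigma> \<and>
               dd_alvin ar \<Sigma> n \<and> n_gumm ar \<Sigma> n \<and> \<not> modular ar \<Sigma> (2 * n - 3))"
  proof (intro allI impI)
  fix n :: nat assume n: "even n \<and> n \<ge> 2"
  have g: "alvin_terms_except ar3 (Sg n) n {1} (gt n)" using gumm_model n by blast
  then have g2: "alvin_terms_except ar3 (Sg n) n {1, n-1} (gt n)"
    unfolding alvin_terms_except_def by auto
  show "\<exists>(ar :: nat \<Rightarrow> nat) \<Sigma>. equational_theory ar \<Sigma> \<and> locally_finite ar \<Sigma> \<and>
               dd_alvin ar \<Sigma> n \<and> n_gumm ar \<Sigma> n \<and> \<not> modular ar \<Sigma> (2 * n - 3)"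
  proof (intro exI conjI)
    show "equational_theory ar3 (Sg n)" by (rule et)
    show "locally_finite ar3 (Sg n)" by (rule lf)
    show "dd_alvin ar3 (Sg n) n" using g2 unfolding dd_alvin_def by blast
    show "n_gumm ar3 (Sg n) n" using g unfolding n_gumm_def by blast
    show "\<not> modular ar3 (Sg n) (2 * n - 3)" using not_mod n by blast
  qed
  qed
qed

end
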